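(* Let $N\geq 3$ and let $|G\rangle=\frac{1}{\sqrt2}(|0\cdots0\rangle+|1\cdots1\rangle)$ be the $N$-qubit GHZ state and $|\psi_+\rangle=\frac1{\sqrt2}(|00\rangle+|11\rangle)$. Let the measurement settings $X_j,X_j'$ ($j=1,\dots,N$) be as in the context, satisfying the non-degeneracy assumptions (ND), and let $A_a,B_b$ ($a,b\in\{0,1\}$) be the associated two-qubit settings defined in the context. Put $$\langle I^N_{CHSH}\rangle=\sum_{a,b\in\{0,1\}}(-1)^{ab}\langle G|\mathbb A_a\otimes\mathbb B_b|G\rangle,\qquad \langle I^2_{CHSH}\rangle=\sum_{a,b\in\{0,1\}}(-1)^{ab}\langle \psi_+|A_a\otimes B_b|\psi_+\rangle.$$ If $\langle I^N_{CHSH}\rangle>2$ then $\langle I^2_{CHSH}\rangle\geq \langle I^N_{CHSH}\rangle$; and if $\langle I^N_{CHSH}\rangle<-2$ then $\langle I^2_{CHSH}\rangle\leq \langle I^N_{CHSH}\rangle$. In particular, violation of the CHSH inequality $|\langle I^2_{CHSH}\rangle|\le 2$ by $|\psi_+\rangle$ is necessary for violation of $|\langle I^N_{CHSH}\rangle|\le 2$ by $|G\rangle$.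
   Context: $\sigma_x,\sigma_y,\sigma_z$ are the Pauli matrices, $\vec\sigma=(\sigma_x,\sigma_y,\sigma_z)$. For $j=1,\dots,N$, single-qubit observables $X_j=\vec n_j\cdot\vec\sigma$, $X_j'=\vec n_j'\cdot\vec\sigma$ with $\vec n_j=(\sin\alpha_j\cos\varphi_j,\sin\alpha_j\sin\varphi_j,\cos\alpha_j)$, $\vec n_j'=(\sin\alpha_j'\cos\varphi_j',\sin\alpha_j'\sin\varphi_j',\cos\alpha_j')$, $\alpha_j,\alpha_j'\in[0,\pi]$, $\varphi_j,\varphi_j'\in\mathbb R$. Define $\mathbb A_0=\bigotimes_{j=1}^{N-1}X_j$, $\mathbb A_1=\bigotimes_{j=1}^{N-1}X_j'$ (acting on qubits $1,\dots,N-1$), $\mathbb B_0=X_N$, $\mathbb B_1=X_N'$ (acting on qubit $N$). Non-degeneracy assumptions (ND): $D:=(\prod_{j=1}^{N-1}\cos\alpha_j)^2+(\prod_{j=1}^{N-1}\sin\alpha_j)^2\neq0$, $D':=(\prod_{j=1}^{N-1}\cos\alpha_j')^2+(\prod_{j=1}^{N-1}\sin\alpha_j')^2\neq0$, and, if $N$ is odd, $\sin\alpha_N\neq0$ and $\sin\alpha_N'\neq0$. Two-qubit settings: with $\varepsilon=D^{-1/2}$, $\varepsilon'=D'^{-1/2}$, let $A_0=\vec{\mathrm n}_0\cdot\vec\sigma$ with $\vec{\mathrm n}_0=\varepsilon\big(\prod_{j=1}^{N-1}\sin\alpha_j\cos\beta,\ \prod_{j=1}^{N-1}\sin\alpha_j\sin\beta,\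 \prod_{j=1}^{N-1}\cos\alpha_j\big)$, $\beta=\sum_{j=1}^{N-1}\varphi_j$, and $A_1$ defined identically from the primed parameters (with $\varepsilon'$, $\beta'=\sum_{j=1}^{N-1}\varphi_j'$). If $N$ is even, $B_0=X_N$, $B_1=X_N'$; if $N$ is odd, $B_0=\cos\varphi_N\sigma_x+\sin\varphi_N\sigma_y$ and $B_1=\cos\varphi_N'\sigma_x+\sin\varphi_N'\sigma_y$. In $\langle\psi_+|A_a\otimes B_b|\psi_+\rangle$, $A_a$ acts on the first and $B_b$ on the second qubit. *)

theory Defs
  imports Complex_Main
begin

text \<open>Qubit computational basis: False = |0>, True = |1>.
  A single-qubit operator is a 2x2 matrix M given as M r c = <r|M|c>.
  An n-qubit state is a function from basis bit strings (bool lists of length n,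
  list position k = qubit k+1) to complex amplitudes.\<close>

type_synonym qop = "bool \<Rightarrow> bool \<Rightarrow> complex"

definition sigma_x :: qop where
  "sigma_x r c = (if r \<noteq> c then 1 else 0)"

definition sigma_y :: qop where
  "sigma_y r c = (if r = False \<and> c = True then - \<i> else if r = True \<and> c = False then \<i> else 0)"

definition sigma_z :: qop where
  "sigma_z r c = (if r = c then (if r then -1 else 1) else 0)"

definition dot_sigma :: "real \<Rightarrow> real \<Rightarrow> real \<Rightarrow> qop" where
  "dot_sigma n1 n2 n3 r c = complex_of_real n1 * sigma_x r c + complex_of_real n2 * sigma_y r c
                            + complex_of_real n3 * sigma_z r c"

definition bloch_obs :: "real \<Rightarrow> real \<Rightarrow> qop" where
  "bloch_obs a p = dot_sigma (sin a * cos p) (sin a * sin p) (cos a)"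

definition basis_strings :: "nat \<Rightarrow> bool list set" where
  "basis_strings n = {xs. length xs = n}"

definition tensor_apply :: "nat \<Rightarrow> (nat \<Rightarrow> qop) \<Rightarrow> (bool list \<Rightarrow> complex) \<Rightarrow> bool list \<Rightarrow> complex" where
  "tensor_apply n M psi x = (\<Sum>y\<in>basis_strings n. (\<Prod>k<n. M k (x ! k) (y ! k)) * psi y)"

definition expect :: "nat \<Rightarrow> (nat \<Rightarrow> qop) \<Rightarrow> (bool list \<Rightarrow> complex) \<Rightarrow> complex" where
  "expect n M psi = (\<Sum>x\<in>basis_strings n. cnj (psi x) * tensor_apply n M psi x)"

definition ghz :: "nat \<Rightarrow> bool list \<Rightarrow> complex" where
  "ghz n x = (if x = replicate n False \<or> x = replicate n True then complex_of_real (1 / sqrt 2) else 0)"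

abbreviation psi_plus :: "bool list \<Rightarrow> complex" where
  "psi_plus \<equiv> ghz 2"

definition Dnd :: "nat \<Rightarrow> (nat \<Rightarrow> real) \<Rightarrow> real" where
  "Dnd N a = (\<Prod>j=1..N-1. cos (a j))^2 + (\<Prod>j=1..N-1. sin (a j))^2"

text \<open>Settings indexed by s \<in> {0,1}: s = 0 unprimed, s = 1 primed.
  al s j, ph s j are alpha_j, phi_j (s=0) resp. alpha'_j, phi'_j (s=1), j = 1..N.\<close>

text \<open>N-qubit operator  A_a (x) B_b  as a family of single-qubit factors (position k = qubit k+1).\<close>
definition bigAB :: "nat \<Rightarrow> (nat \<Rightarrow> nat \<Rightarrow> real) \<Rightarrow> (nat \<Rightarrow> nat \<Rightarrow> real) \<Rightarrow> nat \<Rightarrow> nat \<Rightarrow> nat \<Rightarrow> qop" where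
  "bigAB N al ph a b k = (if k + 1 < N then bloch_obs (al a (k+1)) (ph a (k+1))
                         else bloch_obs (al b N) (ph b N))"

definition twoA :: "nat \<Rightarrow> (nat \<Rightarrow> nat \<Rightarrow> real) \<Rightarrow> (nat \<Rightarrow> nat \<Rightarrow> real) \<Rightarrow> nat \<Rightarrow> qop" where
  "twoA N al ph a =
     (let eps = 1 / sqrt (Dnd N (al a));
          S = (\<Prod>j=1..N-1. sin (al a j));
          C = (\<Prod>j=1..N-1. cos (al a j));
          beta = (\<Sum>j=1..N-1. ph a j)
      in dot_sigma (eps * S * cos beta) (eps * S * sin beta) (eps * C))"

definition twoB :: "nat \<Rightarrow> (nat \<Rightarrow> nat \<Rightarrow> real) \<Rightarrow> (nat \<Rightarrow> nat \<Rightarrow> real) \<Rightarrow> nat \<Rightarrow> qop" where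
  "twoB N al ph b =
     (if even N then bloch_obs (al b N) (ph b N)
      else dot_sigma (cos (ph b N)) (sin (ph b N)) 0)"

definition twoAB :: "nat \<Rightarrow> (nat \<Rightarrow> nat \<Rightarrow> real) \<Rightarrow> (nat \<Rightarrow> nat \<Rightarrow> real) \<Rightarrow> nat \<Rightarrow> nat \<Rightarrow> nat \<Rightarrow> qop" where
  "twoAB N al ph a b k = (if k = 0 then twoA N al ph a else twoB N al ph b)"

definition I_N_CHSH :: "nat \<Rightarrow> (nat \<Rightarrow> nat \<Rightarrow> real) \<Rightarrow> (nat \<Rightarrow> nat \<Rightarrow> real) \<Rightarrow> complex" where
  "I_N_CHSH N al ph = (\<Sum>a\<in>{0,1::nat}. \<Sum>b\<in>{0,1::nat}. (-1) ^ (a * b) * expect N (bigAB N al ph a b) (ghz N))"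

definition I_2_CHSH :: "nat \<Rightarrow> (nat \<Rightarrow> nat \<Rightarrow> real) \<Rightarrow> (nat \<Rightarrow> nat \<Rightarrow> real) \<Rightarrow> complex" where
  "I_2_CHSH N al ph = (\<Sum>a\<in>{0,1::nat}. \<Sum>b\<in>{0,1::nat}. (-1) ^ (a * b) * expect 2 (twoAB N al ph a b) psi_plus)"

end

theory Submission
  imports Defs
begin

lemma sum_two:
  assumes "finite S" "a \<in> S" "b \<in> S" "a \<noteq> b" "\<forall>x\<in>S. x \<noteq> a \<and> x \<noteq> b \<longrightarrow> f x = 0"
  shows "sum f S = f a + f b"
proof -
  have "sum f S = sum f {a,b}"
    by (rule sum.mono_neutral_right) (use assms in auto)
  then show ?thesis using assms by simp
qed

lemma ghz_expect:
  assumes n: "n \<ge> 1"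
  shows "expect n M (ghz n) = ((\<Prod>k<n. M k False False) + (\<Prod>k<n. M k True True)
     + (\<Prod>k<n. M k False True) + (\<Prod>k<n. M k True False)) / 2"
proof -
  let ?z0 = "replicate n False" and ?z1 = "replicate n True"
  let ?S = "basis_strings n"
  have fin: "finite ?S" unfolding basis_strings_def using finite_lists_length_eq[of "UNIV::bool set" n] by simp
  have in0: "?z0 \<in> ?S" and in1: "?z1 \<in> ?S" unfolding basis_strings_def by auto
  have ne: "?z0 \<noteq> ?z1" using n by (cases n) auto
  let ?r = "complex_of_real (1 / sqrt 2)"
  have g0: "ghz n ?z0 = ?r" and g1: "ghz n ?z1 = ?r" unfolding ghz_def by auto
  have gz: "\<And>x. x \<noteq> ?z0 \<and> x \<noteq> ?z1 \<Longrightarrow> ghz n x = 0" unfolding ghz_def by auto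
  have T: "tensor_apply n M (ghz n) x =
      (\<Prod>k<n. M k (x ! k) False) * ?r + (\<Prod>k<n. M k (x ! k) True) * ?r" for x
    unfolding tensor_apply_def
    by (subst sum_two[OF fin in0 in1 ne]) (auto simp: gz g0 g1)
  have rr: "cnj ?r * ?r = 1/2"
    by (simp flip: of_real_mult)
  have "expect n M (ghz n) = cnj ?r * tensor_apply n M (ghz n) ?z0 + cnj ?r * tensor_apply n M (ghz n) ?z1"
    unfolding expect_def
    by (subst sum_two[OF fin in0 in1 ne]) (auto simp: gz g0 g1)
  also have "\<dots> = cnj ?r * ?r * ((\<Prod>k<n. M k False False) + (\<Prod>k<n. M k True True)
     + (\<Prod>k<n. M k False True) + (\<Prod>k<n. M k True False))"
    unfolding T by (simp add: algebra_simps)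
  finally show ?thesis unfolding rr by simp
qed


lemma ds_entries:
  "dot_sigma x y z False False = complex_of_real z"
  "dot_sigma x y z True True = - complex_of_real z"
  "dot_sigma x y z False True = complex_of_real x - \<i> * complex_of_real y"
  "dot_sigma x y z True False = complex_of_real x + \<i> * complex_of_real y"
  by (simp_all add: dot_sigma_def sigma_x_def sigma_y_def sigma_z_def)

lemma bloch_entries:
  "bloch_obs a p False False = complex_of_real (cos a)"
  "bloch_obs a p True True = - complex_of_real (cos a)"
  "bloch_obs a p False True = complex_of_real (sin a) * cis (- p)"
  "bloch_obs a p True False = complex_of_real (sin a) * cis p"
  by (simp_all add: bloch_obs_def ds_entries complex_eq_iff)

lemma two_expect:
  "expect 2 (\<lambda>k. if k = 0 then dot_sigma x1 y1 z1 else dot_sigma x2 y2 z2) (ghz 2)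
   = complex_of_real (x1*x2 - y1*y2 + z1*z2)"
  apply (subst ghz_expect, simp)
  apply (simp add: numeral_2_eq_2 lessThan_Suc ds_entries)
  apply (simp add: complex_eq_iff algebra_simps)
  done

lemma prod_cis:
  "(\<Prod>k<(m::nat). complex_of_real (u k) * cis (v k)) = complex_of_real (\<Prod>k<m. u k) * cis (\<Sum>k<m. v k)"
  by (induction m) (simp_all add: cis_mult[symmetric] algebra_simps)

lemma prod_neg:
  "(\<Prod>k<(m::nat). - complex_of_real (u k)) = (-1)^m * complex_of_real (\<Prod>k<m. u k)"
  by (induction m) (simp_all add: algebra_simps)

lemma big_expect:
  assumes N: "N \<ge> 2"
  shows "expect N (bigAB N al ph a b) (ghz N) = complex_of_real (
    (1 - (-1)^(N-1)) / 2 * (\<Prod>j=1..N-1. cos (al a j)) * cos (al b N)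
    + (\<Prod>j=1..N-1. sin (al a j)) * sin (al b N) * cos ((\<Sum>j=1..N-1. ph a j) + ph b N))"
proof -
  obtain m where m: "N = Suc m" using N by (cases N) auto
  have P: "(\<Prod>k<N. bigAB N al ph a b k r c) =
      (\<Prod>k<m. bloch_obs (al a (Suc k)) (ph a (Suc k)) r c) * bloch_obs (al b N) (ph b N) r c" for r c
    unfolding m prod.lessThan_Suc by (simp add: bigAB_def)
  have C: "(\<Prod>j=1..N-1. f j) = (\<Prod>k<m. f (Suc k))" for f :: "nat \<Rightarrow> real"
    using prod.atLeast1_atMost_eq[of f m] by (simp add: m)
  have Sm: "(\<Sum>j=1..N-1. f j) = (\<Sum>k<m. f (Suc k))" for f :: "nat \<Rightarrow> real"
    using sum.atLeast1_atMost_eq[of f m] by (simp add: m)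
  have nc: "(\<Prod>k<m. complex_of_real (sin (al a (Suc k))) * cis (- ph a (Suc k)))
      = complex_of_real (\<Prod>k<m. sin (al a (Suc k))) * cis (- (\<Sum>k<m. ph a (Suc k)))"
    by (simp add: prod_cis sum_negf)
  show ?thesis
    apply (subst ghz_expect, use N in simp)
    apply (simp only: P bloch_entries prod_cis prod_neg nc C Sm of_real_prod[symmetric])
    apply (simp del: of_real_prod add: sum_negf m complex_eq_iff cis.sel cos_add sin_add algebra_simps)
    apply (simp add: field_simps)
    done
qed


lemma lin_max: "0 \<le> (x::real) \<Longrightarrow> x \<le> 1 \<Longrightarrow> x * A + R \<le> max R (A + R)"
proof (cases "A \<ge> 0")
  case True
  assume "0 \<le> x" "x \<le> 1"
  then have "x * A \<le> A" using True by (simp add: mult_left_le_one_le)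
  then show ?thesis by simp
next
  case False
  assume "0 \<le> x" "x \<le> 1"
  then have "x * A \<le> 0" using False by (simp add: mult_nonneg_nonpos)
  then show ?thesis by simp
qed

lemma abs_mult_le: "\<bar>x::real\<bar> \<le> 1 \<Longrightarrow> \<bar>y\<bar> \<le> c \<Longrightarrow> \<bar>x * y\<bar> \<le> c"
proof -
  assume a: "\<bar>x\<bar> \<le> 1" "\<bar>y\<bar> \<le> c"
  have "\<bar>x * y\<bar> = \<bar>x\<bar> * \<bar>y\<bar>" by (simp add: abs_mult)
  also have "\<dots> \<le> 1 * \<bar>y\<bar>" using a by (intro mult_right_mono) auto
  finally show ?thesis using a by simp
qed

lemma vertex1:
  fixes G00 G01 G10 G11 p0 p1 q0 q1 :: real
  assumes G: "\<bar>G00\<bar> \<le> 1" "\<bar>G01\<bar> \<le> 1" "\<bar>G10\<bar> \<le> 1" "\<bar>G11\<bar> \<le> 1"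
    and p: "0 \<le> p0" "p0 \<le> 1" "0 \<le> p1" "p1 \<le> 1"
    and q: "0 \<le> q0" "q0 \<le> 1" "0 \<le> q1" "q1 \<le> 1"
    and gt: "p0*q0*G00 + p0*q1*G01 + p1*q0*G10 - p1*q1*G11 > 2"
  shows "G00 + G01 + G10 - G11 \<ge> p0*q0*G00 + p0*q1*G01 + p1*q0*G10 - p1*q1*G11"
proof -
  have a1: "\<bar>q0 * G00\<bar> \<le> 1" "\<bar>q1 * G01\<bar> \<le> 1" "\<bar>q0 * G10\<bar> \<le> 1" "\<bar>q1 * G11\<bar> \<le> 1"
    using G q by (auto intro!: abs_mult_le)
  have b1: "\<bar>p1 * (q0 * G10 - q1 * G11)\<bar> \<le> 2" using a1 p by (intro abs_mult_le) auto
  have e1: "p0*q0*G00 + p0*q1*G01 + p1*q0*G10 - p1*q1*G11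
      = p0 * (q0*G00 + q1*G01) + p1 * (q0 * G10 - q1 * G11)" by (simp add: algebra_simps)
  have s1: "p0*q0*G00 + p0*q1*G01 + p1*q0*G10 - p1*q1*G11 \<le> (q0*G00 + q1*G01) + p1 * (q0 * G10 - q1 * G11)"
    using lin_max[OF p(1,2), of "q0*G00 + q1*G01" "p1 * (q0 * G10 - q1 * G11)"] e1 gt b1 by auto
  have s2: "(q0*G00 + q1*G01) + p1 * (q0 * G10 - q1 * G11) \<le> q0*(G00 + G10) + q1*(G01 - G11)"
    using lin_max[OF p(3,4), of "q0 * G10 - q1 * G11" "q0*G00 + q1*G01"] s1 gt a1
    by (auto simp: algebra_simps)
  have b3: "\<bar>q1*(G01 - G11)\<bar> \<le> 2" using G q by (intro abs_mult_le) auto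
  have s3: "q0*(G00 + G10) + q1*(G01 - G11) \<le> (G00 + G10) + q1*(G01 - G11)"
    using lin_max[OF q(1,2), of "G00 + G10" "q1*(G01 - G11)"] s1 s2 gt b3 by auto
  have s4: "(G00 + G10) + q1*(G01 - G11) \<le> G00 + G01 + G10 - G11"
    using lin_max[OF q(3,4), of "G01 - G11" "G00 + G10"] s1 s2 s3 gt G by auto
  show ?thesis using s1 s2 s3 s4 by linarith
qed


lemma abs_prod_le1: "\<bar>\<Prod>j\<in>J. f j\<bar> \<le> (1::real)" if "\<And>j. \<bar>f j\<bar> \<le> 1"
  unfolding abs_prod using that by (intro prod_le_1) auto

lemma Dle1: assumes N: "N \<ge> 2" shows "Dnd N A \<le> 1"
proof -
  have sp: "(\<Prod>j=1..N-1. f j) = f 1 * (\<Prod>j=2..N-1. f j)" for f :: "nat \<Rightarrow> real"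
    using prod.atLeast_Suc_atMost[of 1 "N-1" f] N by (simp add: numeral_2_eq_2)
  have c: "\<bar>\<Prod>j=2..N-1. cos (A j)\<bar> \<le> 1" and s: "\<bar>\<Prod>j=2..N-1. sin (A j)\<bar> \<le> 1"
    by (auto intro!: abs_prod_le1)
  have sq: "(x * y)^2 \<le> x^2" if "\<bar>y\<bar> \<le> 1" for x y :: real
  proof -
    have "y^2 \<le> 1" using that by (simp add: abs_le_square_iff[of y 1, symmetric] abs_square_le_1)
    then have "x^2 * y^2 \<le> x^2 * 1" by (intro mult_left_mono) auto
    then show ?thesis by (simp add: power_mult_distrib)
  qed
  have "Dnd N A \<le> (cos (A 1))^2 + (sin (A 1))^2"
    unfolding Dnd_def sp using sq[OF c, of "cos (A 1)"] sq[OF s, of "sin (A 1)"] by linarith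
  then show ?thesis by simp
qed

lemma Dge0: "Dnd N A \<ge> 0" unfolding Dnd_def by simp

lemma cs_ineq: "(a*b + c*d)^2 \<le> (a^2 + c^2) * (b^2 + d^2)" for a b c d :: real
proof -
  have "(a^2 + c^2) * (b^2 + d^2) - (a*b + c*d)^2 = (a*d - c*b)^2" by (simp add: power2_eq_square algebra_simps)
  then show ?thesis by (smt (verit) zero_le_power2)
qed

lemma key:
  assumes N: "N \<ge> 3" and ND: "Dnd N (al a) \<noteq> 0" and r: "0 \<le> al b N" "al b N \<le> pi"
  shows "Re (expect N (bigAB N al ph a b) (ghz N)) =
           sqrt (Dnd N (al a)) * (if even N then 1 else sin (al b N)) * Re (expect 2 (twoAB N al ph a b) psi_plus)
         \<and> \<bar>Re (expect 2 (twoAB N al ph a b) psi_plus)\<bar> \<le> 1"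
proof -
  define C where "C = (\<Prod>j=1..N-1. cos (al a j))"
  define S where "S = (\<Prod>j=1..N-1. sin (al a j))"
  define \<beta> where "\<beta> = (\<Sum>j=1..N-1. ph a j)"
  define D where "D = Dnd N (al a)"
  define \<epsilon> where "\<epsilon> = 1 / sqrt D"
  define c where "c = cos (al b N)"
  define s where "s = sin (al b N)"
  define \<phi> where "\<phi> = ph b N"
  have D: "D = C^2 + S^2" unfolding D_def Dnd_def C_def S_def by simp
  have Dpos: "D > 0" using ND Dge0[of N "al a"] unfolding D_def by linarith
  have Dle: "D \<le> 1" unfolding D_def using Dle1 N by simp
  have se: "sqrt D * \<epsilon> = 1" unfolding \<epsilon>_def using Dpos by simp
  have e2: "\<epsilon>^2 * D = 1" unfolding \<epsilon>_def using Dpos by (simp add: power_divide)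
  have epos: "\<epsilon> \<ge> 0" unfolding \<epsilon>_def using Dpos by simp
  have cs1: "c^2 + s^2 = 1" unfolding c_def s_def by simp
  have twoAB: "twoAB N al ph a b = (\<lambda>k. if k = 0 then twoA N al ph a else twoB N al ph b)"
    unfolding twoAB_def by auto
  have tA: "twoA N al ph a = dot_sigma (\<epsilon> * S * cos \<beta>) (\<epsilon> * S * sin \<beta>) (\<epsilon> * C)"
    unfolding twoA_def Let_def \<epsilon>_def S_def C_def \<beta>_def D_def by simp
  have N2: "N \<ge> 2" using N by simp
  have X: "Re (expect N (bigAB N al ph a b) (ghz N)) =
     (1 - (-1)^(N-1)) / 2 * C * c + S * s * cos (\<beta> + \<phi>)"
    using N unfolding C_def S_def \<beta>_def c_def s_def \<phi>_def
    by (simp only: big_expect[OF N2] Re_complex_of_real)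
  show ?thesis
  proof (cases "even N")
    case True
    have m1: "(-1::real)^(N-1) = -1" using True N by (simp add: odd_pos)
    have tB: "twoB N al ph b = dot_sigma (s * cos \<phi>) (s * sin \<phi>) c"
      unfolding twoB_def bloch_obs_def using True s_def c_def \<phi>_def by simp
    define F where "F = \<epsilon> * S * cos \<beta> * (s * cos \<phi>) - \<epsilon> * S * sin \<beta> * (s * sin \<phi>) + \<epsilon> * C * c"
    have Y: "Re (expect 2 (twoAB N al ph a b) psi_plus) = F"
      unfolding twoAB tA tB two_expect F_def by simp
    have F2: "F = \<epsilon> * (C * c + S * (s * cos (\<beta> + \<phi>)))"
      unfolding F_def cos_add by (simp add: algebra_simps)
    have "(C * c + S * (s * cos (\<beta> + \<phi>)))^2 \<le> (C^2 + S^2) * (c^2 + (s * cos (\<beta> + \<phi>))^2)"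
      by (rule cs_ineq)
    also have "\<dots> \<le> D * 1"
      unfolding D[symmetric]
    proof (intro mult_left_mono)
      have "(cos (\<beta> + \<phi>))^2 \<le> 1" by (simp add: abs_square_le_1)
      then have "s^2 * (cos (\<beta> + \<phi>))^2 \<le> s^2 * 1" by (intro mult_left_mono) auto
      then show "c^2 + (s * cos (\<beta> + \<phi>))^2 \<le> 1" using cs1 by (simp add: power_mult_distrib)
    qed (use Dpos in simp)
    finally have "F^2 \<le> \<epsilon>^2 * D" unfolding F2 power_mult_distrib
      using epos by (intro mult_left_mono) auto
    then have "F^2 \<le> 1" using e2 by simp
    then have Fb: "\<bar>F\<bar> \<le> 1" by (simp add: abs_square_le_1)
    have "sqrt D * F = (sqrt D * \<epsilon>) * (C * c + S * (s * cos (\<beta> + \<phi>)))"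
      unfolding F2 by (simp only: mult.assoc)
    then have "Re (expect N (bigAB N al ph a b) (ghz N)) = sqrt D * F"
      unfolding X m1 se by simp
    then show ?thesis using True Y Fb unfolding D_def by simp
  next
    case False
    have m1: "(-1::real)^(N-1) = 1" using False N by simp
    have tB: "twoB N al ph b = dot_sigma (cos \<phi>) (sin \<phi>) 0"
      unfolding twoB_def using False \<phi>_def by simp
    define F where "F = \<epsilon> * S * cos \<beta> * cos \<phi> - \<epsilon> * S * sin \<beta> * sin \<phi>"
    have Y: "Re (expect 2 (twoAB N al ph a b) psi_plus) = F"
      unfolding twoAB tA tB two_expect F_def by simp
    have F2: "F = \<epsilon> * (S * cos (\<beta> + \<phi>))"
      unfolding F_def cos_add by (simp add: algebra_simps)
    have "(S * cos (\<beta> + \<phi>))^2 \<le> S^2 * 1"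
      unfolding power_mult_distrib by (intro mult_left_mono) (auto simp: abs_square_le_1)
    also have "\<dots> \<le> D" using D by simp
    finally have "F^2 \<le> \<epsilon>^2 * D" unfolding F2 power_mult_distrib
      using epos by (intro mult_left_mono) auto
    then have "F^2 \<le> 1" using e2 by simp
    then have Fb: "\<bar>F\<bar> \<le> 1" by (simp add: abs_square_le_1)
    have "sqrt D * s * F = (sqrt D * \<epsilon>) * (S * s * cos (\<beta> + \<phi>))"
      unfolding F2 by (simp only: mult.assoc mult.left_commute)
    then have "Re (expect N (bigAB N al ph a b) (ghz N)) = sqrt D * s * F"
      unfolding X m1 se by (simp add: mult.commute mult.left_commute) (metis)
    then show ?thesis using False Y Fb unfolding D_def s_def by simp
  qed
qed


theorem theorem1:
  fixes N :: nat and alpha alpha' phi phi' :: "nat \<Rightarrow> real"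
  defines "al \<equiv> (\<lambda>s::nat. if s = 0 then alpha else alpha')"
      and "ph \<equiv> (\<lambda>s::nat. if s = 0 then phi else phi')"
  assumes N3: "N \<ge> 3"
    and alpha_range: "\<forall>j\<in>{1..N}. 0 \<le> alpha j \<and> alpha j \<le> pi"
    and alpha'_range: "\<forall>j\<in>{1..N}. 0 \<le> alpha' j \<and> alpha' j \<le> pi"
    and ND: "Dnd N alpha \<noteq> 0" and ND': "Dnd N alpha' \<noteq> 0"
    and ND_odd: "odd N \<longrightarrow> sin (alpha N) \<noteq> 0 \<and> sin (alpha' N) \<noteq> 0"
  shows "(Re (I_N_CHSH N al ph) > 2 \<longrightarrow> Re (I_2_CHSH N al ph) \<ge> Re (I_N_CHSH N al ph))
       \<and> (Re (I_N_CHSH N al ph) < -2 \<longrightarrow> Re (I_2_CHSH N al ph) \<le> Re (I_N_CHSH N al ph))"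
proof -
  define X where "X a b = Re (expect N (bigAB N al ph a b) (ghz N))" for a b
  define Y where "Y a b = Re (expect 2 (twoAB N al ph a b) psi_plus)" for a b
  define p where "p a = sqrt (Dnd N (al a))" for a
  define q where "q b = (if even N then 1 else sin (al b N))" for b
  have IN: "Re (I_N_CHSH N al ph) = X 0 0 + X 0 1 + X 1 0 - X 1 1"
    unfolding I_N_CHSH_def X_def by simp
  have I2: "Re (I_2_CHSH N al ph) = Y 0 0 + Y 0 1 + Y 1 0 - Y 1 1"
    unfolding I_2_CHSH_def Y_def by simp
  have NDa: "Dnd N (al a) \<noteq> 0" if "a \<in> {0,1}" for a
    using that ND ND' unfolding al_def by auto
  have rb: "0 \<le> al b N \<and> al b N \<le> pi" if "b \<in> {0,1}" for b
    using that alpha_range alpha'_range N3 unfolding al_def by auto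
  have K: "X a b = p a * q b * Y a b \<and> \<bar>Y a b\<bar> \<le> 1" if "a \<in> {0,1}" "b \<in> {0,1}" for a b
    unfolding X_def Y_def p_def q_def using key[of N al a b ph, OF N3 NDa[OF that(1)]] rb[OF that(2)] by blast
  have pb: "0 \<le> p a \<and> p a \<le> 1" for a
    unfolding p_def using Dle1[of N "al a"] Dge0[of N "al a"] N3 by auto
  have qb: "0 \<le> q b \<and> q b \<le> 1" if "b \<in> {0,1}" for b
    unfolding q_def using rb[OF that] by (auto intro: sin_ge_zero)
  have K00: "X 0 0 = p 0 * q 0 * Y 0 0" "\<bar>Y 0 0\<bar> \<le> 1" using K[of 0 0] by auto
  have K01: "X 0 1 = p 0 * q 1 * Y 0 1" "\<bar>Y 0 1\<bar> \<le> 1" using K[of 0 1] by auto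
  have K10: "X 1 0 = p 1 * q 0 * Y 1 0" "\<bar>Y 1 0\<bar> \<le> 1" using K[of 1 0] by auto
  have K11: "X 1 1 = p 1 * q 1 * Y 1 1" "\<bar>Y 1 1\<bar> \<le> 1" using K[of 1 1] by auto
  have q0: "0 \<le> q 0" "q 0 \<le> 1" and q1: "0 \<le> q 1" "q 1 \<le> 1" using qb[of 0] qb[of 1] by auto
  have p0: "0 \<le> p 0" "p 0 \<le> 1" and p1: "0 \<le> p 1" "p 1 \<le> 1" using pb[of 0] pb[of 1] by auto
  have A: "Re (I_2_CHSH N al ph) \<ge> Re (I_N_CHSH N al ph)" if "Re (I_N_CHSH N al ph) > 2"
    using vertex1[OF K00(2) K01(2) K10(2) K11(2) p0 p1 q0 q1] that
    unfolding IN I2 K00(1) K01(1) K10(1) K11(1) by simp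
  have B: "Re (I_2_CHSH N al ph) \<le> Re (I_N_CHSH N al ph)" if "Re (I_N_CHSH N al ph) < -2"
  proof -
    have n: "\<bar>- Y a b\<bar> \<le> 1" if "\<bar>Y a b\<bar> \<le> 1" for a b using that by simp
    show ?thesis
      using vertex1[OF n[OF K00(2)] n[OF K01(2)] n[OF K10(2)] n[OF K11(2)] p0 p1 q0 q1] that
      unfolding IN I2 K00(1) K01(1) K10(1) K11(1) by (simp add: algebra_simps)
  qed
  show ?thesis using A B by blast
qed

end
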